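(* Let $n\ge 13$ and let $T^*$ be a chemical tree on $n$ vertices with maximum degree $\Delta(T^* )=3$ and at least $3$ vertices of degree $3$. Let $\Omega(n)$ be the set of chemical trees $T$ on $n$ vertices having $3$ vertices of degree $3$, $n-8$ vertices of degree $2$ and $5$ vertices of degree $1$, with $m_{1,2}(T)=m_{2,3}(T)=5$, $m_{1,3}(T)=0$, $m_{3,3}(T)=2$ and $m_{2,2}(T)=n-13$. If $T^*\notin\Omega(n)$, then there exists $T\in\Omega(n)$ such that $SO(T)<SO(T^* )$ and $SO_{red}(T)<SO_{red}(T^* )$.
   Context: A chemical tree is a tree with maximum degree at most $4$. $d_G(u)$ is the degree of $u$ and $m_{i,j}(G)$ is the number of edges joining a vertex of degree $i$ to a vertex of degree $j$. $SO(G)=\sum_{uv\in E(G)}\sqrt{d_G(u)^2+d_G(v)^2}$ and $SO_{red}(G)=\sum_{uv\in E(G)}\sqrt{(d_G(u)-1)^2+(d_G(v)-1)^2}$. *)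

theory Defs
  imports Complex_Main
begin

definition simple_graph :: "'a set \<Rightarrow> 'a set set \<Rightarrow> bool" where
  "simple_graph V E \<longleftrightarrow> finite V \<and> (\<forall>e\<in>E. e \<subseteq> V \<and> card e = 2)"

definition deg :: "'a set set \<Rightarrow> 'a \<Rightarrow> nat" where
  "deg E v = card {e \<in> E. v \<in> e}"

definition adj :: "'a set set \<Rightarrow> ('a \<times> 'a) set" where
  "adj E = {(u, v). {u, v} \<in> E \<and> u \<noteq> v}"

definition connected_graph :: "'a set \<Rightarrow> 'a set set \<Rightarrow> bool" where
  "connected_graph V E \<longleftrightarrow> (\<forall>u\<in>V. \<forall>v\<in>V. (u, v) \<in> (adj E)\<^sup>*)"

definition is_tree :: "'a set \<Rightarrow> 'a set set \<Rightarrow> bool" where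
  "is_tree V E \<longleftrightarrow> simple_graph V E \<and> V \<noteq> {} \<and> connected_graph V E \<and> card E = card V - 1"

definition chemical_tree :: "'a set \<Rightarrow> 'a set set \<Rightarrow> bool" where
  "chemical_tree V E \<longleftrightarrow> is_tree V E \<and> (\<forall>v\<in>V. deg E v \<le> 4)"

definition max_degree :: "'a set \<Rightarrow> 'a set set \<Rightarrow> nat" where
  "max_degree V E = Max (deg E ` V)"

definition num_deg :: "'a set \<Rightarrow> 'a set set \<Rightarrow> nat \<Rightarrow> nat" where
  "num_deg V E k = card {v \<in> V. deg E v = k}"

definition medges :: "'a set set \<Rightarrow> nat \<Rightarrow> nat \<Rightarrow> nat" where
  "medges E i j = card {e \<in> E. \<exists>u v. e = {u, v} \<and> u \<noteq> v \<and>
      ((deg E u = i \<and> deg E v = j) \<or> (deg E u = j \<and> deg E v = i))}"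

definition SO :: "'a set set \<Rightarrow> real" where
  "SO E = (\<Sum>e\<in>E. sqrt (\<Sum>v\<in>e. (real (deg E v))\<^sup>2))"

definition SO_red :: "'a set set \<Rightarrow> real" where
  "SO_red E = (\<Sum>e\<in>E. sqrt (\<Sum>v\<in>e. (real (deg E v) - 1)\<^sup>2))"

definition Omega :: "nat \<Rightarrow> ('a set \<times> 'a set set) set" where
  "Omega n = {(V, E). chemical_tree V E \<and> card V = n \<and>
      num_deg V E 3 = 3 \<and> num_deg V E 2 = n - 8 \<and> num_deg V E 1 = 5 \<and>
      medges E 1 2 = 5 \<and> medges E 2 3 = 5 \<and> medges E 1 3 = 0 \<and>
      medges E 3 3 = 2 \<and> medges E 2 2 = n - 13}"

end

theory Submission
  imports Defs
begin

definition cls :: "'a set set \<Rightarrow> 'a set \<Rightarrow> nat \<times> nat" where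
  "cls E e = (Min (deg E ` e), Max (deg E ` e))"

definition mc :: "'a set set \<Rightarrow> nat \<times> nat \<Rightarrow> nat" where
  "mc E p = card {e \<in> E. cls E e = p}"

lemma cls_pair: "cls E {u,v} = (min (deg E u) (deg E v), max (deg E u) (deg E v))"
  by (simp add: cls_def)

lemma sg_finite: "simple_graph V E \<Longrightarrow> finite V"
  by (simp add: simple_graph_def)

lemma sg_finE: "simple_graph V E \<Longrightarrow> finite E"
  unfolding simple_graph_def
  by (meson Pow_iff finite_Pow_iff finite_subset subsetI)

lemma sg_edge: "simple_graph V E \<Longrightarrow> e \<in> E \<Longrightarrow> \<exists>u v. e = {u,v} \<and> u \<noteq> v \<and> u \<in> V \<and> v \<in> V"
  unfolding simple_graph_def by (metis card_2_iff insert_subset)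

lemma sg_sub: "simple_graph V E \<Longrightarrow> e \<in> E \<Longrightarrow> e \<subseteq> V"
  unfolding simple_graph_def by blast

lemma medges_mc:
  assumes sg: "simple_graph V E" and ij: "i \<le> j"
  shows "medges E i j = mc E (i,j)"
proof -
  have "{e \<in> E. \<exists>u v. e = {u, v} \<and> u \<noteq> v \<and>
      ((deg E u = i \<and> deg E v = j) \<or> (deg E u = j \<and> deg E v = i))} = {e \<in> E. cls E e = (i,j)}"
  proof (rule Collect_cong)
    fix e
    show "(e \<in> E \<and> (\<exists>u v. e = {u, v} \<and> u \<noteq> v \<and>
      ((deg E u = i \<and> deg E v = j) \<or> (deg E u = j \<and> deg E v = i)))) = (e \<in> E \<and> cls E e = (i,j))"
    proof (cases "e \<in> E")
      case True
      then obtain u v where e: "e = {u,v}" "u \<noteq> v" using sg_edge[OF sg] by blast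
      show ?thesis using True e ij
        by (auto simp: cls_pair doubleton_eq_iff min_def max_def)
    qed simp
  qed
  then show ?thesis by (simp add: medges_def mc_def)
qed

definition P6 :: "(nat \<times> nat) set" where
  "P6 = {(1,1),(1,2),(1,3),(2,2),(2,3),(3,3)}"

lemma edge_sum_gen:
  assumes sg: "simple_graph V E" and d: "\<forall>v\<in>V. deg E v \<in> {1,2,3}"
  shows "(\<Sum>e\<in>E. K (cls E e)) = (\<Sum>p\<in>P6. real (mc E p) * K p)"
proof -
  have fE: "finite E" using sg_finE[OF sg] .
  have sub: "cls E ` E \<subseteq> P6"
  proof
    fix q assume "q \<in> cls E ` E"
    then obtain e where e: "e \<in> E" "q = cls E e" by blast
    then obtain u v where uv: "e = {u,v}" "u \<noteq> v" "u \<in> V" "v \<in> V" using sg_edge[OF sg] by blast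
    have "deg E u \<in> {1,2,3}" "deg E v \<in> {1,2,3}" using d uv by auto
    then show "q \<in> P6" using e uv by (auto simp: cls_pair P6_def)
  qed
  have "(\<Sum>e\<in>E. K (cls E e)) = (\<Sum>q\<in>cls E ` E. \<Sum>e\<in>{x\<in>E. cls E x = q}. K (cls E e))"
    by (rule sum.image_gen[OF fE])
  also have "\<dots> = (\<Sum>q\<in>cls E ` E. real (mc E q) * K q)"
    by (rule sum.cong) (auto simp: mc_def)
  also have "\<dots> = (\<Sum>q\<in>P6. real (mc E q) * K q)"
  proof (rule sum.mono_neutral_left)
    show "finite P6" by (simp add: P6_def)
    show "cls E ` E \<subseteq> P6" by (rule sub)
    show "\<forall>i\<in>P6 - cls E ` E. real (mc E i) * K i = 0"
    proof
      fix q assume "q \<in> P6 - cls E ` E"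
      then have h: "{e \<in> E. cls E e = q} = {}" by auto
      show "real (mc E q) * K q = 0" unfolding mc_def h by simp
    qed
  qed
  finally show ?thesis .
qed

lemma pair_sum:
  assumes sg: "simple_graph V E" and e: "e \<in> E"
  shows "(\<Sum>v\<in>e. \<psi> (deg E v)) = \<psi> (fst (cls E e)) + \<psi> (snd (cls E e))"
proof -
  obtain u v where uv: "e = {u,v}" "u \<noteq> v" using sg_edge[OF sg e] by blast
  have s: "(\<Sum>v\<in>e. \<psi> (deg E v)) = \<psi> (deg E u) + \<psi> (deg E v)" using uv by simp
  show ?thesis
  proof (cases "deg E u \<le> deg E v")
    case True
    then have "cls E e = (deg E u, deg E v)" using uv(1) by (simp add: cls_pair)
    then show ?thesis using s by simp
  next
    case False
    then have "cls E e = (deg E v, deg E u)" using uv(1) by (simp add: cls_pair)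
    then show ?thesis using s by (simp add: add.commute)
  qed
qed

lemma edge_sum:
  fixes G :: "'b::comm_ring_1 \<Rightarrow> real" 
  assumes sg: "simple_graph V E" and d: "\<forall>v\<in>V. deg E v \<in> {1,2,3}"
  shows "(\<Sum>e\<in>E. G (\<Sum>v\<in>e. \<psi> (deg E v))) = (\<Sum>p\<in>P6. real (mc E p) * G (\<psi> (fst p) + \<psi> (snd p)))"
proof -
  have "(\<Sum>e\<in>E. G (\<Sum>v\<in>e. \<psi> (deg E v))) = (\<Sum>e\<in>E. (\<lambda>p. G (\<psi> (fst p) + \<psi> (snd p))) (cls E e))"
  proof (rule sum.cong)
    fix e assume "e \<in> E"
    then show "G (\<Sum>v\<in>e. \<psi> (deg E v)) = (\<lambda>p. G (\<psi> (fst p) + \<psi> (snd p))) (cls E e)"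
      using pair_sum[OF sg \<open>e \<in> E\<close>, of \<psi>] by simp
  qed simp
  also have "\<dots> = (\<Sum>p\<in>P6. real (mc E p) * G (\<psi> (fst p) + \<psi> (snd p)))"
    by (rule edge_sum_gen[OF sg d, where K="\<lambda>p. G (\<psi> (fst p) + \<psi> (snd p))"])
  finally show ?thesis .
qed

lemma card_ind: "finite A \<Longrightarrow> real (card {x\<in>A. P x}) = (\<Sum>x\<in>A. if P x then 1 else 0)"
proof -
  assume f: "finite A"
  have "(\<Sum>x\<in>{x\<in>A. P x}. (1::real)) = (\<Sum>x\<in>A. if P x then 1 else 0)"
    by (rule sum.inter_filter[OF f])
  then show ?thesis by simp
qed

lemma num_deg_sum: "finite V \<Longrightarrow> real (num_deg V E t) = (\<Sum>v\<in>V. if deg E v = t then 1 else 0)"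
  unfolding num_deg_def by (rule card_ind)

lemma handshake:
  assumes sg: "simple_graph V E"
  shows "(\<Sum>v\<in>V. \<phi> v * real (deg E v)) = (\<Sum>e\<in>E. \<Sum>v\<in>e. \<phi> v)"
proof -
  have fV: "finite V" using sg_finite[OF sg] .
  have fE: "finite E" using sg_finE[OF sg] .
  have "(\<Sum>v\<in>V. \<phi> v * real (deg E v)) = (\<Sum>v\<in>V. \<Sum>e\<in>E. if v \<in> e then \<phi> v else 0)"
  proof (rule sum.cong)
    fix v assume "v \<in> V"
    have "real (deg E v) = (\<Sum>e\<in>E. if v \<in> e then 1 else 0)"
      unfolding deg_def by (rule card_ind[OF fE])
    then show "\<phi> v * real (deg E v) = (\<Sum>e\<in>E. if v \<in> e then \<phi> v else 0)"
      by (auto simp: sum_distrib_left intro!: sum.cong)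
  qed simp
  also have "\<dots> = (\<Sum>e\<in>E. \<Sum>v\<in>V. if v \<in> e then \<phi> v else 0)" by (rule sum.swap)
  also have "\<dots> = (\<Sum>e\<in>E. \<Sum>v\<in>e. \<phi> v)"
  proof (rule sum.cong)
    fix e assume "e \<in> E"
    then have "e \<subseteq> V" using sg_sub[OF sg] by blast
    then have "{v\<in>V. v \<in> e} = e" by blast
    then show "(\<Sum>v\<in>V. if v \<in> e then \<phi> v else 0) = (\<Sum>v\<in>e. \<phi> v)"
      by (metis sum.inter_filter[OF fV])
  qed simp
  finally show ?thesis .
qed

lemma sqrt4: "sqrt 4 = 2"
  by (simp add: real_sqrt_unique)

lemma EQ:
  assumes sg: "simple_graph V E" and d: "\<forall>v\<in>V. deg E v \<in> {1,2,3}"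
  shows "real (num_deg V E 1) + real (num_deg V E 2) + real (num_deg V E 3) = real (card V)"
    and "real (mc E (1,1)) + real (mc E (1,2)) + real (mc E (1,3)) + real (mc E (2,2)) + real (mc E (2,3)) + real (mc E (3,3)) = real (card E)"
    and "real (num_deg V E 1) = 2 * real (mc E (1,1)) + real (mc E (1,2)) + real (mc E (1,3))"
    and "2 * real (num_deg V E 2) = real (mc E (1,2)) + 2 * real (mc E (2,2)) + real (mc E (2,3))"
    and "3 * real (num_deg V E 3) = real (mc E (1,3)) + real (mc E (2,3)) + 2 * real (mc E (3,3))"
    and "SO E = real (mc E (1,1)) * sqrt 2 + real (mc E (1,2)) * sqrt 5 + real (mc E (1,3)) * sqrt 10 + real (mc E (2,2)) * sqrt 8 + real (mc E (2,3)) * sqrt 13 + real (mc E (3,3)) * sqrt 18"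
    and "SO_red E = real (mc E (1,2)) + 2 * real (mc E (1,3)) + real (mc E (2,2)) * sqrt 2 + real (mc E (2,3)) * sqrt 5 + real (mc E (3,3)) * sqrt 8"
proof -
  have fV: "finite V" using sg_finite[OF sg] .
  have fE: "finite E" using sg_finE[OF sg] .
  have P6e: "P6 = {(1,1),(1,2),(1,3),(2,2),(2,3),(3,3)}" by (simp add: P6_def)
  show "real (num_deg V E 1) + real (num_deg V E 2) + real (num_deg V E 3) = real (card V)"
  proof -
    have "real (card V) = (\<Sum>v\<in>V. (1::real))" by simp
    also have "\<dots> = (\<Sum>v\<in>V. (if deg E v = 1 then 1 else 0) + (if deg E v = 2 then 1 else 0) + (if deg E v = 3 then 1 else 0))"
      by (rule sum.cong) (use d in auto)
    also have "\<dots> = real (num_deg V E 1) + real (num_deg V E 2) + real (num_deg V E 3)"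
      by (simp add: sum.distrib num_deg_sum[OF fV])
    finally show ?thesis by simp
  qed
  show "real (mc E (1,1)) + real (mc E (1,2)) + real (mc E (1,3)) + real (mc E (2,2)) + real (mc E (2,3)) + real (mc E (3,3)) = real (card E)"
    using edge_sum[OF sg d, of "\<lambda>_. 1" "\<lambda>_. 0::real"] by (simp add: P6e)
  have hs: "real t * real (num_deg V E t) = (\<Sum>p\<in>P6. real (mc E p) * ((if fst p = t then 1 else 0) + (if snd p = t then 1 else 0)))" for t
  proof -
    have "real t * real (num_deg V E t) = (\<Sum>v\<in>V. (if deg E v = t then 1 else 0) * real (deg E v))"
      by (auto simp: num_deg_sum[OF fV] sum_distrib_left intro!: sum.cong)
    also have "\<dots> = (\<Sum>e\<in>E. \<Sum>v\<in>e. (if deg E v = t then 1 else 0))"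
      by (rule handshake[OF sg])
    also have "\<dots> = (\<Sum>e\<in>E. id (\<Sum>v\<in>e. (\<lambda>d. if d = t then 1 else 0) (deg E v)))" by simp
    also have "\<dots> = (\<Sum>p\<in>P6. real (mc E p) * id ((\<lambda>d. if d = t then 1 else 0) (fst p) + (\<lambda>d. if d = t then 1 else 0) (snd p)))"
      by (rule edge_sum[OF sg d])
    finally show ?thesis by simp
  qed
  show "real (num_deg V E 1) = 2 * real (mc E (1,1)) + real (mc E (1,2)) + real (mc E (1,3))"
    using hs[of 1] by (simp add: P6e)
  show "2 * real (num_deg V E 2) = real (mc E (1,2)) + 2 * real (mc E (2,2)) + real (mc E (2,3))"
    using hs[of 2] by (simp add: P6e)
  show "3 * real (num_deg V E 3) = real (mc E (1,3)) + real (mc E (2,3)) + 2 * real (mc E (3,3))"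
    using hs[of 3] by (simp add: P6e)
  show "SO E = real (mc E (1,1)) * sqrt 2 + real (mc E (1,2)) * sqrt 5 + real (mc E (1,3)) * sqrt 10 + real (mc E (2,2)) * sqrt 8 + real (mc E (2,3)) * sqrt 13 + real (mc E (3,3)) * sqrt 18"
    unfolding SO_def using edge_sum[OF sg d, of sqrt "\<lambda>d. (real d)\<^sup>2"] by (simp add: P6e)
  show "SO_red E = real (mc E (1,2)) + 2 * real (mc E (1,3)) + real (mc E (2,2)) * sqrt 2 + real (mc E (2,3)) * sqrt 5 + real (mc E (3,3)) * sqrt 8"
    unfolding SO_red_def using edge_sum[OF sg d, of sqrt "\<lambda>d. (real d - 1)\<^sup>2"] by (simp add: P6e sqrt4)
qed

lemma conn_closed:
  assumes c: "connected_graph V E" and x: "x \<in> V" "x \<in> S"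
    and cl: "\<And>a b. (a,b) \<in> adj E \<Longrightarrow> a \<in> S \<Longrightarrow> b \<in> S"
  shows "V \<subseteq> S"
proof
  fix y assume "y \<in> V"
  then have "(x,y) \<in> (adj E)\<^sup>*" using c x unfolding connected_graph_def by blast
  then show "y \<in> S" by (induction rule: rtrancl_induct) (use x cl in auto)
qed

lemma deg_pos:
  assumes sg: "simple_graph V E" and c: "connected_graph V E" and n2: "2 \<le> card V" and v: "v \<in> V"
  shows "1 \<le> deg E v"
proof (rule ccontr)
  assume "\<not> 1 \<le> deg E v"
  then have "deg E v = 0" by simp
  then have h: "{e\<in>E. v\<in>e} = {}" using sg_finE[OF sg] unfolding deg_def by simp
  have "V \<subseteq> {v}"
    by (rule conn_closed[OF c v]) (use h in \<open>auto simp: adj_def\<close>)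
  then have "card V \<le> 1" using card_mono[of "{v}" V] by simp
  then show False using n2 by simp
qed

lemma no11:
  assumes sg: "simple_graph V E" and c: "connected_graph V E" and n3: "3 \<le> card V"
  shows "mc E (1,1) = 0"
proof -
  have fE: "finite E" using sg_finE[OF sg] .
  have h: "{e\<in>E. cls E e = (1,1)} = {}"
  proof (rule ccontr)
    assume "{e\<in>E. cls E e = (1,1)} \<noteq> {}"
    then obtain e where e: "e\<in>E" "cls E e = (1,1)" by blast
    obtain u v where uv: "e={u,v}" "u\<noteq>v" "u\<in>V" "v\<in>V" using sg_edge[OF sg e(1)] by blast
    have du: "deg E u = 1" "deg E v = 1" using e(2) uv(1) by (auto simp: cls_pair min_def max_def split: if_splits)
    have one: "f = e" if a: "a \<in> e" "f \<in> E" "a \<in> f" for a f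
    proof -
      have "deg E a = 1" using a(1) du uv(1) by auto
      then have "card {g\<in>E. a\<in>g} = 1" by (simp add: deg_def)
      then obtain g0 where g0: "{g\<in>E. a\<in>g} = {g0}" by (rule card_1_singletonE)
      have "e \<in> {g0}" unfolding g0[symmetric] using a e(1) by simp
      moreover have "f \<in> {g0}" unfolding g0[symmetric] using a by simp
      ultimately show "f = e" by simp
    qed
    have "V \<subseteq> e"
    proof (rule conn_closed[OF c uv(3)])
      show "u \<in> e" using uv by simp
      fix a b assume "(a,b) \<in> adj E" "a \<in> e"
      then have "{a,b} \<in> E" by (simp add: adj_def)
      then have "{a,b} = e" using one[of a "{a,b}"] \<open>a \<in> e\<close> by simp
      then show "b \<in> e" by auto
    qed
    then have "card V \<le> card e" using card_mono[of e V] uv by simp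
    then show False using n3 uv by simp
  qed
  show ?thesis unfolding mc_def h by simp
qed

lemma conn_card:
  assumes sg: "simple_graph V E" and c: "connected_graph V E" and ne: "V \<noteq> {}"
  shows "card V \<le> card E + 1"
proof -
  have fE: "finite E" using sg_finE[OF sg] .
  have fV: "finite V" using sg_finite[OF sg] .
  obtain r where r: "r \<in> V" using ne by blast
  define R where "R = adj E"
  define dist where "dist v = (LEAST k. (r,v) \<in> R ^^ k)" for v
  have reach: "\<exists>k. (r,v) \<in> R^^k" if "v\<in>V" for v
    using c r that rtrancl_power unfolding connected_graph_def R_def by blast
  have par: "\<exists>u. {u,v} \<in> E \<and> dist u < dist v" if "v \<in> V - {r}" for v
  proof -
    have d: "(r,v) \<in> R^^(dist v)" unfolding dist_def using LeastI_ex[OF reach] that by blast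
    have "dist v \<noteq> 0"
    proof
      assume "dist v = 0"
      then have "(r,v) \<in> R^^0" using d by simp
      then show False using that by simp
    qed
    then obtain d' where dd: "dist v = Suc d'" by (cases "dist v") auto
    then have "(r,v) \<in> R^^d' O R" using d by simp
    then obtain u where u: "(r,u) \<in> R^^d'" "(u,v) \<in> R" by blast
    have "dist u \<le> d'" unfolding dist_def using u(1) by (rule Least_le)
    then have "dist u < dist v" using dd by simp
    moreover have "{u,v} \<in> E" using u(2) by (simp add: R_def adj_def)
    ultimately show ?thesis by blast
  qed
  define p where "p v = (SOME u. {u,v} \<in> E \<and> dist u < dist v)" for v
  have pp: "{p v, v} \<in> E \<and> dist (p v) < dist v" if "v \<in> V - {r}" for v
    using someI_ex[OF par[OF that]] unfolding p_def .
  have inj: "inj_on (\<lambda>v. {p v, v}) (V - {r})"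
  proof (rule inj_onI)
    fix v w assume v: "v \<in> V - {r}" and w: "w \<in> V - {r}" and eq: "{p v, v} = {p w, w}"
    show "v = w"
    proof (rule ccontr)
      assume "v \<noteq> w"
      then have "v = p w" "w = p v" using eq by (auto simp: doubleton_eq_iff)
      then show False using pp[OF v] pp[OF w] by simp
    qed
  qed
  have "(\<lambda>v. {p v, v}) ` (V - {r}) \<subseteq> E" using pp by auto
  then have "card (V - {r}) \<le> card E" using card_inj_on_le[OF inj _ fE] by blast
  then show ?thesis using r fV by simp
qed

lemma tri:
  assumes ct: "chemical_tree V E" and k: "num_deg V E 3 = 3"
  shows "mc E (3,3) \<le> 2"
proof (rule ccontr)
  assume "\<not> ?thesis" then have m3: "3 \<le> mc E (3,3)" by simp
  have sg: "simple_graph V E" and c: "connected_graph V E" and ne: "V \<noteq> {}"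
    and cE: "card E = card V - 1" using ct unfolding chemical_tree_def is_tree_def by auto
  have fE: "finite E" using sg_finE[OF sg] .
  have fV: "finite V" using sg_finite[OF sg] .
  obtain a b c' where D: "{v\<in>V. deg E v = 3} = {a,b,c'}" and dd: "a\<noteq>b" "b\<noteq>c'" "a\<noteq>c'"
    using k unfolding num_deg_def card_3_iff by blast
  let ?F = "{e\<in>E. cls E e = (3,3)}"
  have sub: "?F \<subseteq> {{a,b},{a,c'},{b,c'}}"
  proof
    fix e assume e: "e \<in> ?F"
    then obtain u v where uv: "e={u,v}" "u\<noteq>v" "u\<in>V" "v\<in>V" using sg_edge[OF sg] by blast
    have "deg E u = 3" "deg E v = 3" using e uv(1) by (auto simp: cls_pair min_def max_def split: if_splits)
    then have "u \<in> {a,b,c'}" "v \<in> {a,b,c'}" using uv D by blast+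
    then show "e \<in> {{a,b},{a,c'},{b,c'}}" using uv(1,2) by (auto simp: doubleton_eq_iff)
  qed
  have "card {{a,b},{a,c'},{b,c'}} = 3" using dd by (simp add: doubleton_eq_iff)
  then have Feq: "?F = {{a,b},{a,c'},{b,c'}}"
    using card_seteq[OF _ sub] m3 unfolding mc_def by simp
  then have inE: "{a,b} \<in> E" "{a,c'} \<in> E" "{b,c'} \<in> E" by auto
  define E' where "E' = E - {{a,b}}"
  have sg': "simple_graph V E'" using sg unfolding simple_graph_def E'_def by auto
  have "adj E \<subseteq> (adj E')\<^sup>*"
  proof
    fix q assume "q \<in> adj E"
    then obtain x y where q: "q = (x,y)" "{x,y} \<in> E" "x \<noteq> y" by (auto simp: adj_def)
    show "q \<in> (adj E')\<^sup>*"
    proof (cases "{x,y} = {a,b}")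
      case True
      have n1: "{a,c'} \<noteq> {a,b}" "{b,c'} \<noteq> {a,b}" using dd by (auto simp: doubleton_eq_iff)
      have e1: "{a,c'} \<in> E'" "{b,c'} \<in> E'" using inE n1 by (auto simp: E'_def)
      have e2: "{c',a} \<in> E'" "{c',b} \<in> E'" using e1 by (simp_all add: insert_commute)
      have ac: "(a,c') \<in> adj E'" "(c',a) \<in> adj E'" "(b,c') \<in> adj E'" "(c',b) \<in> adj E'"
        using e1 e2 dd by (simp_all add: adj_def)
      have "(a,b) \<in> (adj E')\<^sup>*" "(b,a) \<in> (adj E')\<^sup>*"
        using ac by (meson converse_rtrancl_into_rtrancl r_into_rtrancl)+
      moreover have "(x = a \<and> y = b) \<or> (x = b \<and> y = a)" using True by (auto simp: doubleton_eq_iff)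
      ultimately show ?thesis using q by auto
    next
      case False
      then have "(x,y) \<in> adj E'" using q by (auto simp: adj_def E'_def)
      then show ?thesis using q by auto
    qed
  qed
  then have sub2: "(adj E)\<^sup>* \<subseteq> (adj E')\<^sup>*" by (rule rtrancl_subset_rtrancl)
  have "connected_graph V E'" unfolding connected_graph_def
  proof (intro ballI)
    fix u w assume "u \<in> V" "w \<in> V"
    then have "(u,w) \<in> (adj E)\<^sup>*" using c unfolding connected_graph_def by blast
    then show "(u,w) \<in> (adj E')\<^sup>*" by (rule subsetD[OF sub2])
  qed
  then have "card V \<le> card E' + 1" using conn_card[OF sg' _ ne] by blast
  moreover have "card E' = card E - 1" unfolding E'_def using inE fE by simp
  moreover have "card V \<ge> 1" using ne fV by (simp add: Suc_leI card_gt_0_iff)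
  moreover have "card E \<noteq> 0" using inE fE by (auto simp: card_eq_0_iff)
  ultimately show False using cE by linarith
qed

lemma omega_of:
  assumes ct: "chemical_tree V E" and cV: "card V = n" and n: "13 \<le> n"
    and d: "\<forall>v\<in>V. deg E v \<in> {1,2,3}" and k: "num_deg V E 3 = 3"
    and m33: "mc E (3,3) = 2" and m13: "mc E (1,3) = 0"
  shows "(V,E) \<in> Omega n"
proof -
  have sg: "simple_graph V E" and c: "connected_graph V E"
    and cE: "card E = card V - 1" using ct unfolding chemical_tree_def is_tree_def by auto
  have m11: "mc E (1,1) = 0" using no11[OF sg c] cV n by simp
  note eq = EQ[OF sg d]
  have rE: "real (card E) = real n - 1" using cE cV n by (simp add: of_nat_diff)
  have r1: "real (mc E (2,3)) = 5" using eq(5) k m33 m13 by simp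
  have r2: "real (mc E (1,2)) = 5" using eq(1-4) r1 rE k m33 m13 m11 cV by simp
  have r3: "real (num_deg V E 1) = 5" using eq(3) r2 m11 m13 by simp
  have r4: "real (num_deg V E 2) = real n - 8" using eq(1) r3 k cV by simp
  have r5: "real (mc E (2,2)) = real n - 13" using eq(2) r1 r2 rE m11 m13 m33 by simp
  have n1: "mc E (2,3) = 5" "mc E (1,2) = 5" "num_deg V E 1 = 5" using r1 r2 r3 by simp_all
  have n2: "num_deg V E 2 = n - 8" using r4 n by (simp add: of_nat_diff[symmetric])
  have n3: "mc E (2,2) = n - 13" using r5 n by (simp add: of_nat_diff[symmetric])
  show ?thesis unfolding Omega_def
    using ct cV k n1 n2 n3 m33 m13 by (simp add: medges_mc[OF sg])
qed

definition good :: "'a set \<Rightarrow> 'a set set \<Rightarrow> bool" where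
  "good V E \<longleftrightarrow> chemical_tree V E \<and> (\<forall>v\<in>V. deg E v \<in> {1,2,3}) \<and> num_deg V E 3 = 3
     \<and> mc E (3,3) = 2 \<and> mc E (1,3) = 0"

lemma adj_sym: "(a,b) \<in> adj E \<Longrightarrow> (b,a) \<in> adj E"
  by (auto simp: adj_def insert_commute)

lemma conn_root:
  assumes r: "r \<in> V" and h: "\<forall>v\<in>V. (r,v) \<in> (adj E)\<^sup>*"
  shows "connected_graph V E"
  unfolding connected_graph_def
proof (intro ballI)
  fix u w assume u: "u \<in> V" and w: "w \<in> V"
  have "(r,u) \<in> (adj E)\<^sup>*" using h u by blast
  then have "(u,r) \<in> (adj E)\<^sup>*"
  proof (induction rule: rtrancl_induct)
    case base then show ?case by simp
  next
    case (step y z)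
    have "(z,y) \<in> adj E" by (rule adj_sym[OF step.hyps(2)])
    then show ?case using step.IH by (rule converse_rtrancl_into_rtrancl)
  qed
  moreover have "(r,w) \<in> (adj E)\<^sup>*" using h w by blast
  ultimately show "(u,w) \<in> (adj E)\<^sup>*" by (rule rtrancl_trans)
qed

lemma leaf_add:
  assumes g: "good V E" and n: "13 \<le> card V" and z: "z \<notin> V"
  shows "\<exists>E'. good (insert z V) E'"
proof -
  have ct: "chemical_tree V E" and d: "\<forall>v\<in>V. deg E v \<in> {1,2,3}" and k: "num_deg V E 3 = 3"
    and m33: "mc E (3,3) = 2" and m13: "mc E (1,3) = 0" using g unfolding good_def by auto
  have sg: "simple_graph V E" and c: "connected_graph V E"
    and cE: "card E = card V - 1" and ne: "V \<noteq> {}" using ct unfolding chemical_tree_def is_tree_def by auto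
  have fE: "finite E" using sg_finE[OF sg] .
  have fV: "finite V" using sg_finite[OF sg] .
  have m11: "mc E (1,1) = 0" using no11[OF sg c] n by simp
  have "(V,E) \<in> Omega (card V)" by (rule omega_of[OF ct refl n d k m33 m13])
  then have "num_deg V E 1 = 5" unfolding Omega_def by simp
  then have "{v\<in>V. deg E v = 1} \<noteq> {}" unfolding num_deg_def by (metis card.empty zero_neq_numeral)
  then obtain l where l: "l \<in> V" "deg E l = 1" by blast
  then have "card {e\<in>E. l\<in>e} = 1" by (simp add: deg_def)
  then obtain e0 where E0: "{e\<in>E. l\<in>e} = {e0}" by (rule card_1_singletonE)
  have e0: "e0 \<in> E" "l \<in> e0" using E0 by blast+
  obtain u v where uv: "e0 = {u,v}" "u \<noteq> v" "u \<in> V" "v \<in> V" using sg_edge[OF sg e0(1)] by blast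
  obtain p where p: "e0 = {l,p}" "p \<noteq> l" "p \<in> V"
  proof (cases "l = u")
    case True then show ?thesis using that uv by blast
  next
    case False then have "l = v" using e0(2) uv by auto
    then show ?thesis using that uv by (metis insert_commute)
  qed
  have emp: "{e\<in>E. cls E e = q} = {}" if "mc E q = 0" for q
    using that fE unfolding mc_def by simp
  have dp: "deg E p = 2"
  proof -
    have dp3: "deg E p \<in> {1,2,3}" using d p by blast
    have cl: "cls E e0 = (min 1 (deg E p), max 1 (deg E p))" using p(1) l(2) by (simp add: cls_pair)
    have "deg E p \<noteq> 1"
    proof
      assume "deg E p = 1"
      then have "e0 \<in> {e\<in>E. cls E e = (1,1)}" using cl e0 by simp
      then show False using emp[OF m11] by blast
    qed
    moreover have "deg E p \<noteq> 3"
    proof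
      assume "deg E p = 3"
      then have "e0 \<in> {e\<in>E. cls E e = (1,3)}" using cl e0 by simp
      then show False using emp[OF m13] by blast
    qed
    ultimately show ?thesis using dp3 by auto
  qed
  define E' where "E' = insert {l,z} E"
  define V' where "V' = insert z V"
  have lz: "l \<noteq> z" using l z by blast
  have zfree: "z \<notin> e" if "e \<in> E" for e using sg_sub[OF sg that] z by blast
  have notin: "{l,z} \<notin> E" using zfree by blast
  have degz: "deg E' z = 1"
  proof -
    have "{e\<in>E'. z\<in>e} = {{l,z}}" using zfree unfolding E'_def by auto
    then show ?thesis by (simp add: deg_def)
  qed
  have degl: "deg E' l = 2"
  proof -
    have "{e\<in>E'. l\<in>e} = insert {l,z} {e\<in>E. l\<in>e}" unfolding E'_def by auto
    also have "\<dots> = {{l,z}, e0}" using E0 by simp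
    finally have "{e\<in>E'. l\<in>e} = {{l,z}, e0}" .
    moreover have "{l,z} \<noteq> e0" using notin e0(1) by blast
    ultimately show ?thesis by (simp add: deg_def)
  qed
  have dego: "deg E' y = deg E y" if "y \<noteq> l" "y \<noteq> z" for y
  proof -
    have "{e\<in>E'. y\<in>e} = {e\<in>E. y\<in>e}" using that unfolding E'_def by auto
    then show ?thesis by (simp add: deg_def)
  qed
  have sg': "simple_graph V' E'"
    using sg fV lz l unfolding simple_graph_def V'_def E'_def by auto
  have conn': "connected_graph V' E'"
  proof (rule conn_root)
    show "l \<in> V'" using l unfolding V'_def by simp
    have sub: "adj E \<subseteq> adj E'" unfolding adj_def E'_def by auto
    have lzadj: "(l,z) \<in> adj E'" using lz unfolding adj_def E'_def by simp
    show "\<forall>v\<in>V'. (l,v) \<in> (adj E')\<^sup>*"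
    proof
      fix v assume "v \<in> V'"
      then have "v = z \<or> v \<in> V" unfolding V'_def by simp
      then show "(l,v) \<in> (adj E')\<^sup>*"
      proof
        assume "v = z" then show ?thesis using lzadj by auto
      next
        assume "v \<in> V"
        then have "(l,v) \<in> (adj E)\<^sup>*" using c l unfolding connected_graph_def by blast
        then show ?thesis using rtrancl_mono[OF sub] by blast
      qed
    qed
  qed
  have cE': "card E' = card V' - 1"
  proof -
    have "card E' = card E + 1" unfolding E'_def using notin fE by simp
    moreover have "card V' = card V + 1" unfolding V'_def using z fV by simp
    moreover have "card V \<ge> 1" using n by simp
    ultimately show ?thesis using cE by simp
  qed
  have d': "\<forall>v\<in>V'. deg E' v \<in> {1,2,3}"
  proof
    fix v assume "v \<in> V'"
    show "deg E' v \<in> {1,2,3}"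
    proof (cases "v = z")
      case True then show ?thesis using degz by simp
    next
      case False
      show ?thesis
      proof (cases "v = l")
        case True then show ?thesis using degl by simp
      next
        case False
        then show ?thesis using \<open>v \<noteq> z\<close> \<open>v \<in> V'\<close> d dego unfolding V'_def by auto
      qed
    qed
  qed
  have ct': "chemical_tree V' E'"
    unfolding chemical_tree_def is_tree_def using sg' conn' cE' d' unfolding V'_def by auto
  have k': "num_deg V' E' 3 = 3"
  proof -
    have "{v\<in>V'. deg E' v = 3} = {v\<in>V. deg E v = 3}"
    proof (rule set_eqI)
      fix v
      show "v \<in> {v\<in>V'. deg E' v = 3} \<longleftrightarrow> v \<in> {v\<in>V. deg E v = 3}"
      proof (cases "v = z")
        case True then show ?thesis using degz z by simp
      next
        case False
        show ?thesis
        proof (cases "v = l")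
          case True then show ?thesis using degl l by simp
        next
          case False
          then show ?thesis using \<open>v \<noteq> z\<close> dego unfolding V'_def by auto
        qed
      qed
    qed
    then show ?thesis using k unfolding num_deg_def by simp
  qed
  have clz: "cls E' {l,z} = (1,2)" using degl degz by (simp add: cls_pair)
  have "p \<noteq> z" using p z by blast
  then have "deg E' p = 2" using dego[of p] p dp by simp
  then have cl0': "cls E' e0 = (2,2)" using degl p by (simp add: cls_pair)
  have cl0: "cls E e0 = (1,2)" using l dp p by (simp add: cls_pair)
  have key: "cls E' e = cls E e" if "e \<in> E" "e \<noteq> e0" for e
  proof -
    have "l \<notin> e" using that E0 by blast
    moreover have "z \<notin> e" using zfree that by blast
    ultimately have "deg E' ` e = deg E ` e"
      by (intro image_cong refl) (metis dego)
    then show ?thesis by (simp add: cls_def)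
  qed
  have same: "{e\<in>E'. cls E' e = q} = {e\<in>E. cls E e = q}" if "q \<noteq> (1,2)" "q \<noteq> (2,2)" for q
  proof (rule set_eqI)
    fix e
    show "e \<in> {e\<in>E'. cls E' e = q} \<longleftrightarrow> e \<in> {e\<in>E. cls E e = q}"
    proof (cases "e = {l,z}")
      case True then show ?thesis using clz notin that by simp
    next
      case False
      show ?thesis
      proof (cases "e = e0")
        case True then show ?thesis using cl0 cl0' that False by (simp add: E'_def)
      next
        case False
        then show ?thesis using key[of e] \<open>e \<noteq> {l,z}\<close> unfolding E'_def by auto
      qed
    qed
  qed
  have "mc E' (3,3) = 2" "mc E' (1,3) = 0" using same[of "(3,3)"] same[of "(1,3)"] m33 m13
    unfolding mc_def by simp_all
  then have "good V' E'" unfolding good_def using ct' d' k' by simp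
  then show ?thesis unfolding V'_def by blast
qed

lemma filter_insert_set: "{x \<in> insert a A. P x} = (if P a then insert a {x\<in>A. P x} else {x\<in>A. P x})"
  by auto

definition B0 :: "nat set set" where
 "B0 = {{0,1},{0,2},{0,11},{11,12},{1,3},{3,4},{1,5},{5,6},{2,7},{7,8},{2,9},{9,10}}"

lemma lt13: "(v::nat) < 13 \<Longrightarrow> v = 0 \<or> v = 1 \<or> v = 2 \<or> v = 3 \<or> v = 4 \<or> v = 5 \<or> v = 6 \<or> v = 7 \<or> v = 8 \<or> v = 9 \<or> v = 10 \<or> v = 11 \<or> v = 12"
  by presburger

lemma degB0: "v < 13 \<Longrightarrow> deg B0 v = (if v \<in> {0,1,2} then 3 else if v \<in> {4,6,8,10,12} then 1 else 2)"
  apply (drule lt13)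
  apply (elim disjE)
  by (simp only: deg_def B0_def filter_insert_set; simp add: doubleton_eq_iff)+

lemma cardB0: "card B0 = 12"
  unfolding B0_def by (simp add: doubleton_eq_iff)

lemma B0mem: "e \<in> B0 \<longleftrightarrow> e = {0,1} \<or> e = {0,2} \<or> e = {0,11} \<or> e = {11,12} \<or> e = {1,3} \<or> e = {3,4}
   \<or> e = {1,5} \<or> e = {5,6} \<or> e = {2,7} \<or> e = {7,8} \<or> e = {2,9} \<or> e = {9,10}"
  unfolding B0_def by simp

lemma good_B0: "good {0..<13} B0"
proof -
  have sg: "simple_graph {0..<13} B0"
    unfolding simple_graph_def Ball_def B0mem by auto
  let ?R = "(adj B0)\<^sup>*"
  have s: "(a,b) \<in> ?R" if "{a,b} \<in> B0" "a \<noteq> b" for a b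
    using that by (simp add: adj_def r_into_rtrancl)
  have t: "(a,c) \<in> ?R" if "(a,b) \<in> ?R" "(b,c) \<in> ?R" for a b c
    using that by (rule rtrancl_trans)
  have r: "(0,v) \<in> ?R" if "v \<in> {0..<13}" for v
  proof -
    have "v < 13" using that by simp
    have a: "(0,1) \<in> ?R" "(1,3) \<in> ?R" "(3,4) \<in> ?R" "(1,5) \<in> ?R" "(5,6) \<in> ?R"
      "(0,2) \<in> ?R" "(2,7) \<in> ?R" "(7,8) \<in> ?R" "(2,9) \<in> ?R" "(9,10) \<in> ?R"
      "(0,11) \<in> ?R" "(11,12) \<in> ?R"
      by (rule s; simp add: B0mem)+
    from lt13[OF \<open>v < 13\<close>] show ?thesis
      by (elim disjE; simp only:; metis a rtrancl_trans rtrancl.rtrancl_refl)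
  qed
  have c: "connected_graph {0..<13} B0"
    by (rule conn_root[of 0]) (use r in auto)
  have d: "\<forall>v\<in>{0..<13::nat}. deg B0 v \<in> {1,2,3}" by (auto simp: degB0)
  have ct: "chemical_tree {0..<13} B0"
    unfolding chemical_tree_def is_tree_def using sg c d cardB0 by auto
  have "{v\<in>{0..<13::nat}. deg B0 v = 3} = {0,1,2}" by (auto simp: degB0 split: if_splits)
  then have k: "num_deg {0..<13} B0 3 = 3" by (simp add: num_deg_def)
  have "{e\<in>B0. cls B0 e = (3,3)} = {{0,1},{0,2}}"
    by (auto simp: B0mem cls_pair degB0)
  then have m33: "mc B0 (3,3) = 2" by (simp add: mc_def doubleton_eq_iff)
  have h13: "{e\<in>B0. cls B0 e = (1,3)} = {}"
    by (auto simp: B0mem cls_pair degB0)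
  have m13: "mc B0 (1,3) = 0" unfolding mc_def h13 by simp
  show ?thesis unfolding good_def using ct d k m33 m13 by simp
qed

lemma ex_good_nat: "13 \<le> m \<Longrightarrow> \<exists>E. good {0..<m::nat} E"
proof (induction m rule: dec_induct)
  case base then show ?case using good_B0 by blast
next
  case (step m)
  then obtain E where "good {0..<m} E" by blast
  moreover have "13 \<le> card {0..<m}" using step by simp
  moreover have "m \<notin> {0..<m}" by simp
  ultimately have "\<exists>E'. good (insert m {0..<m}) E'" by (rule leaf_add)
  moreover have "insert m {0..<m} = {0..<Suc m}" by auto
  ultimately show ?case by simp
qed

lemma good_image:
  assumes g: "good V E" and inj: "inj_on f V"
  shows "good (f ` V) ((`) f ` E)"
proof -
  have ct: "chemical_tree V E" and d: "\<forall>v\<in>V. deg E v \<in> {1,2,3}" and k: "num_deg V E 3 = 3"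
    and m33: "mc E (3,3) = 2" and m13: "mc E (1,3) = 0" using g unfolding good_def by auto
  have sg: "simple_graph V E" and c: "connected_graph V E"
    and cE: "card E = card V - 1" and ne: "V \<noteq> {}" using ct unfolding chemical_tree_def is_tree_def by auto
  have fE: "finite E" using sg_finE[OF sg] .
  have fV: "finite V" using sg_finite[OF sg] .
  define E1 where "E1 = (`) f ` E"
  have EP: "E \<subseteq> Pow V" using sg_sub[OF sg] by blast
  have injE: "inj_on ((`) f) E" using inj_on_image_Pow[OF inj] EP by (rule inj_on_subset)
  have deg1: "deg E1 (f v) = deg E v" if v: "v \<in> V" for v
  proof -
    have "{e'\<in>E1. f v \<in> e'} = (`) f ` {e\<in>E. v\<in>e}"
    proof (rule set_eqI)
      fix e'
      show "e' \<in> {e'\<in>E1. f v \<in> e'} \<longleftrightarrow> e' \<in> (`) f ` {e\<in>E. v\<in>e}"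
      proof
        assume "e' \<in> {e'\<in>E1. f v \<in> e'}"
        then obtain e where e: "e \<in> E" "e' = f ` e" "f v \<in> f ` e" unfolding E1_def by blast
        have "e \<subseteq> V" using sg_sub[OF sg e(1)] .
        then have "v \<in> e" using e(3) inj v by (simp add: inj_on_image_mem_iff)
        then show "e' \<in> (`) f ` {e\<in>E. v\<in>e}" using e by blast
      next
        assume "e' \<in> (`) f ` {e\<in>E. v\<in>e}"
        then show "e' \<in> {e'\<in>E1. f v \<in> e'}" unfolding E1_def by blast
      qed
    qed
    moreover have "inj_on ((`) f) {e\<in>E. v\<in>e}" using injE by (rule inj_on_subset) blast
    ultimately show ?thesis unfolding deg_def by (simp add: card_image)
  qed
  have cls1: "cls E1 (f ` e) = cls E e" if e: "e \<in> E" for e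
  proof -
    have "e \<subseteq> V" using sg_sub[OF sg e] .
    then have "deg E1 ` f ` e = deg E ` e" unfolding image_image using deg1
      by (intro image_cong refl) blast
    then show ?thesis unfolding cls_def by simp
  qed
  have mc1: "mc E1 q = mc E q" for q
  proof -
    have "{e'\<in>E1. cls E1 e' = q} = (`) f ` {e\<in>E. cls E e = q}"
    proof (rule set_eqI)
      fix e'
      show "e' \<in> {e'\<in>E1. cls E1 e' = q} \<longleftrightarrow> e' \<in> (`) f ` {e\<in>E. cls E e = q}"
      proof
        assume "e' \<in> {e'\<in>E1. cls E1 e' = q}"
        then obtain e where e: "e \<in> E" "e' = f ` e" "cls E1 e' = q" unfolding E1_def by blast
        then have "cls E e = q" using cls1 by simp
        then show "e' \<in> (`) f ` {e\<in>E. cls E e = q}" using e by blast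
      next
        assume "e' \<in> (`) f ` {e\<in>E. cls E e = q}"
        then obtain e where e: "e \<in> E" "e' = f ` e" "cls E e = q" by blast
        then have "cls E1 e' = q" using cls1 by simp
        moreover have "e' \<in> E1" using e unfolding E1_def by blast
        ultimately show "e' \<in> {e'\<in>E1. cls E1 e' = q}" by blast
      qed
    qed
    moreover have "inj_on ((`) f) {e\<in>E. cls E e = q}" using injE by (rule inj_on_subset) blast
    ultimately show ?thesis unfolding mc_def by (simp add: card_image)
  qed
  have sg1: "simple_graph (f ` V) E1"
    unfolding simple_graph_def
  proof (intro conjI ballI)
    show "finite (f ` V)" using fV by simp
    fix e' assume "e' \<in> E1"
    then obtain e where e: "e \<in> E" "e' = f ` e" unfolding E1_def by blast
    have eV: "e \<subseteq> V" using sg_sub[OF sg e(1)] .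
    show "e' \<subseteq> f ` V" using e eV by blast
    have "inj_on f e" using inj eV by (rule inj_on_subset)
    then show "card e' = 2" using e sg unfolding simple_graph_def by (simp add: card_image)
  qed
  have conn1: "connected_graph (f ` V) E1"
    unfolding connected_graph_def
  proof (intro ballI)
    fix u' w' assume "u' \<in> f ` V" "w' \<in> f ` V"
    then obtain u w where uw: "u \<in> V" "w \<in> V" "u' = f u" "w' = f w" by blast
    have "(u,w) \<in> (adj E)\<^sup>*" using c uw unfolding connected_graph_def by blast
    then have "(f u, f w) \<in> (adj E1)\<^sup>*"
    proof (induction rule: rtrancl_induct)
      case base then show ?case by simp
    next
      case (step y z)
      then have yz: "{y,z} \<in> E" "y \<noteq> z" by (auto simp: adj_def)
      have "y \<in> V" "z \<in> V" using sg_sub[OF sg yz(1)] by auto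
      then have "f y \<noteq> f z" using inj yz(2) by (meson inj_on_contraD)
      moreover have "f ` {y,z} \<in> E1" unfolding E1_def using yz(1) by (rule imageI)
      then have "{f y, f z} \<in> E1" by simp
      ultimately have "(f y, f z) \<in> adj E1" by (simp add: adj_def)
      then show ?case by (rule rtrancl_into_rtrancl[OF step.IH])
    qed
    then show "(u', w') \<in> (adj E1)\<^sup>*" using uw by simp
  qed
  have cE1: "card E1 = card (f ` V) - 1"
    using cE card_image[OF injE] card_image[OF inj] unfolding E1_def by simp
  have d1: "\<forall>v\<in>f ` V. deg E1 v \<in> {1,2,3}" using d by (simp add: deg1)
  have ct1: "chemical_tree (f ` V) E1"
    unfolding chemical_tree_def is_tree_def using sg1 conn1 cE1 d1 ne by auto
  have "{v'\<in>f ` V. deg E1 v' = 3} = f ` {v\<in>V. deg E v = 3}" by (force simp: deg1)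
  moreover have "inj_on f {v\<in>V. deg E v = 3}" using inj by (rule inj_on_subset) blast
  ultimately have k1: "num_deg (f ` V) E1 3 = 3" using k unfolding num_deg_def by (simp add: card_image)
  show ?thesis unfolding good_def E1_def[symmetric] using ct1 d1 k1 mc1 m33 m13 by simp
qed

lemma ex_omega:
  assumes fV: "finite V" and cV: "card V = n" and n: "13 \<le> n"
  shows "\<exists>E'. good V E' \<and> (V, E') \<in> Omega n"
proof -
  obtain h where h: "bij_betw h {0..<card V} V" using ex_bij_betw_nat_finite[OF fV] by blast
  obtain E0 where E0: "good {0..<n} E0" using ex_good_nat[OF n] by blast
  have hi: "inj_on h {0..<n}" and hV: "h ` {0..<n} = V" using h cV unfolding bij_betw_def by auto
  have g: "good V ((`) h ` E0)" using good_image[OF E0 hi] hV by simp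
  then have "(V, (`) h ` E0) \<in> Omega n"
    using omega_of[of V "(`) h ` E0" n] cV n unfolding good_def by simp
  then show ?thesis using g by blast
qed

lemma sq_bounds:
  "(141421/100000) < sqrt 2" "sqrt 2 < (141422/100000)" "(223606/100000) < sqrt 5" "sqrt 5 < (223607/100000)"
  "(316227/100000) < sqrt 10" "sqrt 10 < (316228/100000)" "(282842/100000) < sqrt 8" "sqrt 8 < (282843/100000)"
  "(360555/100000) < sqrt 13" "sqrt 13 < (360556/100000)" "(424264/100000) < sqrt 18" "sqrt 18 < (424265/100000)"
  by (rule real_less_rsqrt real_less_lsqrt; simp add: power2_eq_square)+

theorem theorem3p2:
  fixes n :: nat and V :: "'a set" and E :: "'a set set"
  assumes "n \<ge> 13"
    and "chemical_tree V E" and "card V = n"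
    and "max_degree V E = 3"
    and "num_deg V E 3 \<ge> 3"
    and "(V, E) \<notin> Omega n"
  shows "\<exists>V' E'. (V', E') \<in> (Omega n :: ('a set \<times> 'a set set) set) \<and>
           SO E' < SO E \<and> SO_red E' < SO_red E"
proof -
  note n = assms(1) and ct = assms(2) and cV = assms(3) and mx = assms(4) and k3 = assms(5)
    and nom = assms(6)
  have sg: "simple_graph V E" and c: "connected_graph V E"
    and cE: "card E = card V - 1" and ne: "V \<noteq> {}" using ct unfolding chemical_tree_def is_tree_def by auto
  have fV: "finite V" using sg_finite[OF sg] .
  have le3: "deg E v \<le> 3" if "v \<in> V" for v
  proof -
    have "deg E v \<le> Max (deg E ` V)" using fV that by (simp add: Max_ge)
    then show ?thesis using mx unfolding max_degree_def by simp
  qed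
  have ge1: "1 \<le> deg E v" if "v \<in> V" for v using deg_pos[OF sg c _ that] cV n by simp
  have d: "\<forall>v\<in>V. deg E v \<in> {1,2,3}"
  proof
    fix v assume "v \<in> V"
    then have "1 \<le> deg E v" "deg E v \<le> 3" using le3 ge1 by auto
    then show "deg E v \<in> {1,2,3}" by auto
  qed
  have m11: "mc E (1,1) = 0" using no11[OF sg c] cV n by simp
  note eq = EQ[OF sg d]
  obtain E' where g': "good V E'" and om: "(V,E') \<in> Omega n" using ex_omega[OF fV cV n] by blast
  have ct': "chemical_tree V E'" and d': "\<forall>v\<in>V. deg E' v \<in> {1,2,3}" and k': "num_deg V E' 3 = 3"
    and m33': "mc E' (3,3) = 2" and m13': "mc E' (1,3) = 0" using g' unfolding good_def by auto
  have sg': "simple_graph V E'" and c': "connected_graph V E'"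
    and cE': "card E' = card V - 1" using ct' unfolding chemical_tree_def is_tree_def by auto
  have m11': "mc E' (1,1) = 0" using no11[OF sg' c'] cV n by simp
  note eq' = EQ[OF sg' d']
  have rE: "real (card E) = real n - 1" using cE cV n by (simp add: of_nat_diff)
  have rE': "real (card E') = real n - 1" using cE' cV n by (simp add: of_nat_diff)
  define K where "K = real (num_deg V E 3)"
  define X where "X = real (mc E (3,3))"
  define A where "A = real (mc E (1,3))"
  have e23: "real (mc E (2,3)) = 3*K - A - 2*X" using eq(5) unfolding K_def X_def A_def by simp
  have e12: "real (mc E (1,2)) = K + 2 - A"
    using eq(1-4) e23 rE cV m11 unfolding K_def X_def A_def by simp
  have e22: "real (mc E (2,2)) = real n - 3 - 4*K + A + X"
    using eq(2) e23 e12 rE m11 unfolding K_def X_def A_def by simp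
  have f23: "real (mc E' (2,3)) = 5" using eq'(5) k' m33' m13' by simp
  have f12: "real (mc E' (1,2)) = 5" using eq'(1-4) f23 rE' cV k' m33' m13' m11' by simp
  have f22: "real (mc E' (2,2)) = real n - 13" using eq'(2) f23 f12 rE' m11' m13' m33' by simp
  have SO1: "SO E = (K+2-A)*sqrt 5 + A*sqrt 10 + (real n - 3 - 4*K + A + X)*sqrt 8 + (3*K-A-2*X)*sqrt 13 + X*sqrt 18"
    using eq(6) e23 e12 e22 m11 unfolding K_def X_def A_def by simp
  have SO2: "SO E' = 5*sqrt 5 + (real n - 13)*sqrt 8 + 5*sqrt 13 + 2*sqrt 18"
    using eq'(6) f23 f12 f22 m11' m13' m33' by simp
  have SR1: "SO_red E = (K+2-A) + 2*A + (real n - 3 - 4*K + A + X)*sqrt 2 + (3*K-A-2*X)*sqrt 5 + X*sqrt 8"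
    using eq(7) e23 e12 e22 unfolding K_def X_def A_def by simp
  have SR2: "SO_red E' = 5 + (real n - 13)*sqrt 2 + 5*sqrt 5 + 2*sqrt 8"
    using eq'(7) f23 f12 f22 m13' m33' by simp
  define ck where "ck = sqrt 5 - 4*sqrt 8 + 3*sqrt 13"
  define ca where "ca = - sqrt 5 + sqrt 10 + sqrt 8 - sqrt 13"
  define cx where "cx = sqrt 8 - 2*sqrt 13 + sqrt 18"
  define rk where "rk = 1 - 4*sqrt 2 + 3*sqrt 5"
  define ra where "ra = 1 + sqrt 2 - sqrt 5"
  define rx where "rx = sqrt 2 - 2*sqrt 5 + sqrt 8"
  have D1: "SO E - SO E' = (K-3)*ck + A*ca + (X-2)*cx"
    unfolding SO1 SO2 ck_def ca_def cx_def by (simp add: algebra_simps)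
  have D2: "SO_red E - SO_red E' = (K-3)*rk + A*ra + (X-2)*rx"
    unfolding SR1 SR2 rk_def ra_def rx_def by (simp add: algebra_simps)
  note sb = sq_bounds
  have bck: "ck \<ge> (173/100)" unfolding ck_def using sb by linarith
  have bca: "ca \<ge> (14/100)" unfolding ca_def using sb by linarith
  have bcx: "cx \<ge> -(15/100)" "cx < -(14/100)" unfolding cx_def using sb by linarith+
  have brk: "rk \<ge> (205/100)" unfolding rk_def using sb by linarith
  have bra: "ra \<ge> (17/100)" unfolding ra_def using sb by linarith
  have brx: "rx \<ge> -(24/100)" "rx < 0" unfolding rx_def using sb by linarith+
  have A0: "A \<ge> 0" "X \<ge> 0" unfolding A_def X_def by simp_all
  have K3: "K \<ge> 3" unfolding K_def using k3 by simp
  have m23: "2*X \<le> 3*K - A" using e23 by (metis of_nat_0_le_iff le_diff_eq add.commute diff_ge_0_iff_ge)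
  have Aca: "A*ca \<ge> A*(14/100)" "A*ra \<ge> A*(17/100)"
    by (rule mult_left_mono[OF bca A0(1)], rule mult_left_mono[OF bra A0(1)])
  have Xcx: "X*cx \<ge> X*(-(15/100))" "X*rx \<ge> X*(-(24/100))"
    by (rule mult_left_mono[OF bcx(1) A0(2)], rule mult_left_mono[OF brx(1) A0(2)])
  have Kck: "(K-3)*ck \<ge> (K-3)*(173/100)" "(K-3)*rk \<ge> (K-3)*(205/100)"
    using K3 by (intro mult_left_mono bck brk; simp)+
  have pos: "SO E' < SO E \<and> SO_red E' < SO_red E"
  proof (cases "num_deg V E 3 = 3")
    case True
    then have K: "K = 3" unfolding K_def by simp
    have "mc E (3,3) \<le> 2" using tri[OF ct True] .
    then have "mc E (3,3) = 0 \<or> mc E (3,3) = 1 \<or> mc E (3,3) = 2" by auto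
    then show ?thesis
    proof (elim disjE)
      assume "mc E (3,3) = 0"
      then have Xv: "X = 0" unfolding X_def by simp
      then have "SO E - SO E' = A*ca - 2*cx" "SO_red E - SO_red E' = A*ra - 2*rx"
        using D1 D2 K by (simp_all add: algebra_simps)
      then have "SO E' < SO E" "SO_red E' < SO_red E" using Aca A0 bcx brx by linarith+
      then show ?thesis by simp
    next
      assume "mc E (3,3) = 1"
      then have Xv: "X = 1" unfolding X_def by simp
      then have "SO E - SO E' = A*ca - cx" "SO_red E - SO_red E' = A*ra - rx"
        using D1 D2 K by (simp_all add: algebra_simps)
      then have "SO E' < SO E" "SO_red E' < SO_red E" using Aca A0 bcx brx by linarith+
      then show ?thesis by simp
    next
      assume h: "mc E (3,3) = 2"
      have "mc E (1,3) \<noteq> 0"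
      proof
        assume "mc E (1,3) = 0"
        then have "(V,E) \<in> Omega n" using omega_of[OF ct cV n d True h] by simp
        then show False using nom by simp
      qed
      then have "A \<ge> 1" unfolding A_def by simp
      moreover have "X = 2" using h unfolding X_def by simp
      then have "SO E - SO E' = A*ca" "SO_red E - SO_red E' = A*ra"
        using D1 D2 K by simp_all
      ultimately have "SO E' < SO E" "SO_red E' < SO_red E" using Aca by linarith+
      then show ?thesis by simp
    qed
  next
    case False
    then have "K \<ge> 4" using k3 unfolding K_def by simp
    moreover have "(X-2)*cx = X*cx - 2*cx" "(X-2)*rx = X*rx - 2*rx" by (simp_all add: algebra_simps)
    moreover have "(K-3)*(173/100) = (173/100)*K - 519/100" "(K-3)*(205/100) = (205/100)*K - 615/100"
      "A*(14/100) = (14/100)*A" "A*(17/100) = (17/100)*A"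
      "X*(-(15/100)) = -(15/100)*X" "X*(-(24/100)) = -(24/100)*X" by simp_all
    ultimately have "SO E' < SO E" "SO_red E' < SO_red E"
      using D1 D2 Aca Xcx Kck m23 A0 bcx brx by linarith+
    then show ?thesis by simp
  qed
  then show ?thesis using om by blast
qed


end
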